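(* Let $\alpha>0$ and $\Delta=\sqrt{1+\alpha^2}$. Let $\gamma_1(\theta)=(\cos\theta,\sin\theta,0)$ be the unit circle and $\gamma_2(\phi)=(\alpha\cos\phi+\Delta,0,\alpha\sin\phi)$ the circle of radius $\alpha$ in the $xz$-plane centered at $(\Delta,0,0)$. Then their Möbius cross-energy equals $4\pi^2$, i.e. $$2\int_0^{2\pi}\!\!\int_0^{2\pi}\frac{\alpha\,d\theta\,d\phi}{\left(\alpha\cos\theta+\sqrt{1+\alpha^2}-\cos\phi\right)^2+\sin^2\phi+\alpha^2\sin^2\theta}=4\pi^2 .$$
   Context: The Möbius cross-energy of two disjoint closed curves $\gamma_i,\gamma_j$ in $\mathbb R^3$ is taken with the convention that each pair of line elements is counted twice: $E_c=2\int\int \frac{|\dot\gamma_i(u)||\dot\gamma_j(v)|}{|\gamma_i(u)-\gamma_j(v)|^2}\,du\,dv$. *)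

theory Defs
  imports "HOL-Analysis.Analysis"
begin

text \<open>Moebius cross-energy of two closed curves parametrised over [0, 2 pi],
  each pair of line elements counted twice.\<close>
definition mobius_cross_energy ::
  "(real \<Rightarrow> real^3) \<Rightarrow> (real \<Rightarrow> real^3) \<Rightarrow> real" where
  "mobius_cross_energy g1 g2 =
     2 * integral (cbox (0, 0) (2 * pi, 2 * pi))
       (\<lambda>(u, v). norm (vector_derivative g1 (at u)) * norm (vector_derivative g2 (at v))
                 / (norm (g1 u - g2 v))\<^sup>2)"

definition circ1 :: "real \<Rightarrow> real^3" where
  "circ1 \<theta> = vector [cos \<theta>, sin \<theta>, 0]"

definition circ2 :: "real \<Rightarrow> real \<Rightarrow> real^3" where
  "circ2 \<alpha> \<phi> = vector [\<alpha> * cos \<phi> + sqrt (1 + \<alpha>\<^sup>2), 0, \<alpha> * sin \<phi>]"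

end

theory Submission imports Defs begin

lemma poisson_deriv:
  fixes r :: real assumes r: "\<bar>r\<bar> < 1"
  shows "((\<lambda>t. t + 2 * arctan (r * sin t / (1 - r * cos t))) has_real_derivative
          (1 - r\<^sup>2) / (1 - 2 * r * cos t + r\<^sup>2)) (at t)"
proof -
  have c: "1 - r * cos t > 0"
  proof -
    have "\<bar>r * cos t\<bar> \<le> \<bar>r\<bar>" using abs_cos_le_one[of t] by (simp add: abs_mult mult_left_le)
    then show ?thesis using r by linarith
  qed
  define C where "C = cos t"
  define S where "S = sin t"
  have sc: "S\<^sup>2 + C\<^sup>2 = 1" unfolding S_def C_def by simp
  have d: "1 - 2 * r * C + r\<^sup>2 = (1 - r * C)\<^sup>2 + (r * S)\<^sup>2"
  proof -
    have h: "r*r*(C*C+S*S) = r*r" using sc by (simp add: power2_eq_square)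
    show ?thesis using h by (simp add: power2_eq_square algebra_simps)
  qed
  have c': "1 - r * C > 0" using c C_def by simp
  have dpos: "(1 - r * C)\<^sup>2 + (r * S)\<^sup>2 > 0" using c' by (simp add: add_pos_nonneg)
  have eq: "1 + 2 * ((r * C * (1 - r * C) - r * S * (r * S)) / (1 - r * C)\<^sup>2 / (1 + (r * S / (1 - r * C))\<^sup>2))
     = (1 - r\<^sup>2) / (1 - 2 * r * C + r\<^sup>2)"
  proof -
    have gen: "N / X\<^sup>2 / (1 + (Y / X)\<^sup>2) = N / (X\<^sup>2 + Y\<^sup>2)" if "X \<noteq> 0" for N X Y :: real
      using that by (simp add: field_simps)
    have "(r * C * (1 - r * C) - r * S * (r * S)) / (1 - r * C)\<^sup>2 / (1 + (r * S / (1 - r * C))\<^sup>2)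
       = (r * C * (1 - r * C) - r * S * (r * S)) / ((1 - r * C)\<^sup>2 + (r * S)\<^sup>2)"
      using c' by (intro gen) simp
    also have "\<dots> = (r * C - r\<^sup>2) / (1 - 2 * r * C + r\<^sup>2)"
    proof -
      have h: "r*r*(C*C+S*S) = r*r" using sc by (simp add: power2_eq_square)
      show ?thesis unfolding d[symmetric] using h by (simp add: power2_eq_square algebra_simps)
    qed
    finally have e: "(r * C * (1 - r * C) - r * S * (r * S)) / (1 - r * C)\<^sup>2 / (1 + (r * S / (1 - r * C))\<^sup>2) = (r * C - r\<^sup>2) / (1 - 2 * r * C + r\<^sup>2)" .
    have Dp: "1 - 2 * r * C + r\<^sup>2 > 0" using d dpos by simp
    show ?thesis unfolding e using Dp by (simp add: field_simps)
  qed
  have "((\<lambda>t. t + 2 * arctan (r * sin t / (1 - r * cos t))) has_real_derivative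
     1 + 2 * ((r * cos t * (1 - r * cos t) - r * sin t * (r * sin t)) / (1 - r * cos t)\<^sup>2 / (1 + (r * sin t / (1 - r * cos t))\<^sup>2))) (at t)"
    using c apply (auto intro!: derivative_eq_intros simp: power2_eq_square)
    by (simp only: divide_inverse inverse_mult_distrib) (simp add: algebra_simps)
  then show ?thesis using eq unfolding C_def S_def by simp
qed

lemma poisson_int:
  fixes r :: real assumes r: "\<bar>r\<bar> < 1"
  shows "((\<lambda>t. (1 - r\<^sup>2) / (1 - 2 * r * cos t + r\<^sup>2)) has_integral 2 * pi) {0..2*pi}"
proof -
  have "((\<lambda>t. (1 - r\<^sup>2) / (1 - 2 * r * cos t + r\<^sup>2)) has_integral
     ((\<lambda>t. t + 2 * arctan (r * sin t / (1 - r * cos t))) (2*pi) - (\<lambda>t. t + 2 * arctan (r * sin t / (1 - r * cos t))) 0)) {0..2*pi}"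
    apply (rule fundamental_theorem_of_calculus)
     apply simp
    using poisson_deriv[OF r] by (simp add: has_real_derivative_iff_has_vector_derivative has_vector_derivative_at_within)
  then show ?thesis by simp
qed

lemma norm_vector3: "norm (vector [x, y, z] :: real^3) = sqrt (x\<^sup>2 + y\<^sup>2 + z\<^sup>2)"
  unfolding norm_eq_sqrt_inner inner_vec_def sum_3 by (simp add: power2_eq_square)

lemma vec3_eq: "(vector [a, b, c] :: real^3) = vector [x, y, z] \<longleftrightarrow> a = x \<and> b = y \<and> c = z"
  by (auto simp: vec_eq_iff forall_3)

lemma vector3_decomp: "(vector [a, b, c] :: real^3) = a *\<^sub>R vector [1,0,0] + b *\<^sub>R vector [0,1,0] + c *\<^sub>R vector [0,0,1]"
  by (auto simp: vec_eq_iff forall_3)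

lemma vd1: "vector_derivative circ1 (at u) = vector [- sin u, cos u, 0]"
proof -
  have e: "circ1 = (\<lambda>t. cos t *\<^sub>R vector [1,0,0] + sin t *\<^sub>R vector [0,1,0] + 0 *\<^sub>R (vector [0,0,1] :: real^3))"
    by (rule ext) (simp add: circ1_def vector3_decomp[of "cos _" "sin _" 0])
  have "(circ1 has_vector_derivative vector [- sin u, cos u, 0]) (at u)"
    unfolding e vector3_decomp[of "- sin u"]
    by (auto intro!: derivative_eq_intros)
  then show ?thesis by (rule vector_derivative_at)
qed

lemma vd2: "vector_derivative (circ2 a) (at u) = vector [- a * sin u, 0, a * cos u]"
proof -
  have e: "circ2 a = (\<lambda>t. (a * cos t + sqrt (1 + a\<^sup>2)) *\<^sub>R vector [1,0,0] + 0 *\<^sub>R vector [0,1,0] + (a * sin t) *\<^sub>R (vector [0,0,1] :: real^3))"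
    by (rule ext) (simp add: circ2_def vector3_decomp[of "a * cos _ + _" 0 "a * sin _"])
  have "(circ2 a has_vector_derivative vector [- a * sin u, 0, a * cos u]) (at u)"
    unfolding e vector3_decomp[of "- a * sin u"]
    by (auto intro!: derivative_eq_intros simp: mult.commute)
  then show ?thesis by (rule vector_derivative_at)
qed

lemma main_calc:
  fixes a :: real assumes a: "a > 0"
  shows "mobius_cross_energy circ1 (circ2 a) = 4 * pi\<^sup>2"
proof -
  define D where "D = sqrt (1 + a\<^sup>2)"
  have D2: "D\<^sup>2 = 1 + a\<^sup>2" unfolding D_def by simp
  have Da: "D > a" unfolding D_def by (rule real_less_rsqrt) simp
  have D1: "D > 1" unfolding D_def using a by (intro real_less_rsqrt) simp
  have Dlt: "D < 1 + a"
  proof -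
    have "D\<^sup>2 < (1 + a)\<^sup>2" using D2 a by (simp add: power2_eq_square algebra_simps)
    then show ?thesis using a by (smt (verit) power_mono)
  qed
  have Dcos: "D - cos u > 0" for u using D1 cos_le_one[of u] by linarith
  have Dacos: "D + a * cos v > 0" for v
  proof -
    have "\<bar>a * cos v\<bar> \<le> a" using a abs_cos_le_one[of v] by (simp add: abs_mult mult_left_le)
    then show ?thesis using Da by linarith
  qed
  have integrand: "(\<lambda>(u, v). norm (vector_derivative circ1 (at u)) * norm (vector_derivative (circ2 a) (at v))
                 / (norm (circ1 u - circ2 a v))\<^sup>2) = (\<lambda>(u,v). (a / 2) * (1 / (D - cos u)) * (1 / (D + a * cos v)))"
  proof (intro ext, clarify)
    fix u v
    have n1: "norm (vector_derivative circ1 (at u)) = 1"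
      unfolding vd1 norm_vector3 by simp
    have n2: "norm (vector_derivative (circ2 a) (at v)) = a"
    proof -
      have "(- a * sin v)\<^sup>2 + 0\<^sup>2 + (a * cos v)\<^sup>2 = a\<^sup>2"
        by (simp add: power_mult_distrib algebra_simps flip: distrib_left)
      then show ?thesis unfolding vd2 norm_vector3 using a by simp
    qed
    have diff: "circ1 u - circ2 a v = vector [cos u - (a * cos v + D), sin u, - a * sin v]"
      by (auto simp: vec_eq_iff forall_3 circ1_def circ2_def D_def)
    have n3: "(norm (circ1 u - circ2 a v))\<^sup>2 = 2 * (D + a * cos v) * (D - cos u)"
    proof -
      have "(norm (circ1 u - circ2 a v))\<^sup>2 = (cos u - (a * cos v + D))\<^sup>2 + (sin u)\<^sup>2 + (- a * sin v)\<^sup>2"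
        unfolding diff norm_vector3 by (simp add: add_nonneg_nonneg)
      also have "\<dots> = 2 * (D + a * cos v) * (D - cos u)"
      proof -
        have s1: "(sin u)\<^sup>2 = 1 - (cos u)\<^sup>2" by (simp add: sin_squared_eq)
        have s2: "(sin v)\<^sup>2 = 1 - (cos v)\<^sup>2" by (simp add: sin_squared_eq)
        show ?thesis unfolding power_mult_distrib s1 s2
          using D2 by (simp add: power2_eq_square algebra_simps)
      qed
      finally show ?thesis .
    qed
    show "norm (vector_derivative circ1 (at u)) * norm (vector_derivative (circ2 a) (at v))
                 / (norm (circ1 u - circ2 a v))\<^sup>2 = (a / 2) * (1 / (D - cos u)) * (1 / (D + a * cos v))"
      unfolding n1 n2 n3 using Dcos[of u] Dacos[of v] by (simp add: field_simps)
  qed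
  have I1: "((\<lambda>u. 1 / (D - cos u)) has_integral 2 * pi / a) {0..2*pi}"
  proof -
    define r where "r = D - a"
    have r: "\<bar>r\<bar> < 1" unfolding r_def using Da Dlt by simp
    have eq: "(\<lambda>u. 1 / (D - cos u)) = (\<lambda>u. (1 / a) * ((1 - r\<^sup>2) / (1 - 2 * r * cos u + r\<^sup>2)))"
    proof
      fix u
      have h1: "1 - 2 * r * cos u + r\<^sup>2 = 2 * (D - a) * (D - cos u)"
        unfolding r_def using D2 by (simp add: power2_eq_square algebra_simps)
      have h2: "1 - r\<^sup>2 = 2 * a * (D - a)"
        unfolding r_def using D2 by (simp add: power2_eq_square algebra_simps)
      show "1 / (D - cos u) = (1 / a) * ((1 - r\<^sup>2) / (1 - 2 * r * cos u + r\<^sup>2))"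
        proof -
        have n: "D - a \<noteq> 0" "D - cos u \<noteq> 0" "a \<noteq> 0" using a Da Dcos[of u] by auto
        have "2 * a * (D - a) / (2 * (D - a) * (D - cos u)) = ((2 * (D - a)) * a) / ((2 * (D - a)) * (D - cos u))"
          by (simp add: mult_ac)
        also have "\<dots> = a / (D - cos u)" using n by (rule_tac mult_divide_mult_cancel_left) simp
        finally show ?thesis unfolding h1 h2 using n by simp
      qed
    qed
    show ?thesis unfolding eq using has_integral_mult_right[OF poisson_int[OF r], of "1/a"] by simp
  qed
  have I2: "((\<lambda>v. 1 / (D + a * cos v)) has_integral 2 * pi) {0..2*pi}"
  proof -
    define r where "r = (1 - D) / a"
    have r: "\<bar>r\<bar> < 1" unfolding r_def using Dlt D1 a by (simp add: abs_if field_simps)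
    have eq: "(\<lambda>v. 1 / (D + a * cos v)) = (\<lambda>v. (1 - r\<^sup>2) / (1 - 2 * r * cos v + r\<^sup>2))"
    proof
      fix v
      have h1: "1 - 2 * r * cos v + r\<^sup>2 = 2 * (D - 1) * (D + a * cos v) / a\<^sup>2"
        unfolding r_def using D2 a apply (simp add: power2_eq_square field_simps) by algebra
      have h2: "1 - r\<^sup>2 = 2 * (D - 1) / a\<^sup>2"
        unfolding r_def using D2 a by (simp add: power2_eq_square field_simps)
      show "1 / (D + a * cos v) = (1 - r\<^sup>2) / (1 - 2 * r * cos v + r\<^sup>2)"
        proof -
        have n: "D - 1 \<noteq> 0" "D + a * cos v \<noteq> 0" "a \<noteq> 0" using a D1 Dacos[of v] by auto
        have X: "2 * (D - 1) / a\<^sup>2 \<noteq> 0" using n by simp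
        have "2 * (D - 1) * (D + a * cos v) / a\<^sup>2 = (2 * (D - 1) / a\<^sup>2) * (D + a * cos v)" by simp
        then show ?thesis unfolding h1 h2 by (simp only: nonzero_divide_mult_cancel_left[OF X])
      qed
    qed
    show ?thesis unfolding eq using poisson_int[OF r] by simp
  qed
  have cont: "continuous_on (cbox (0, 0) (2 * pi, 2 * pi)) (\<lambda>(u,v). (a / 2) * (1 / (D - cos u)) * (1 / (D + a * cos v)))"
    unfolding case_prod_unfold
    using Dcos Dacos by (intro continuous_intros) (auto simp: less_imp_neq[symmetric])
  have inner: "integral (cbox 0 (2*pi)) (\<lambda>v. (a / 2) * (1 / (D - cos u)) * (1 / (D + a * cos v))) = (a/2) * (1 / (D - cos u)) * (2 * pi)" for u
    using has_integral_mult_right[OF I2, of "(a / 2) * (1 / (D - cos u))"] by (simp add: integral_unique)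
  have outer: "integral (cbox 0 (2*pi)) (\<lambda>u. (a/2) * (1 / (D - cos u)) * (2 * pi)) = (a/2) * (2 * pi / a) * (2 * pi)"
  proof -
    have "((\<lambda>u. (a/2) * (1 / (D - cos u)) * (2 * pi)) has_integral (a/2) * (2 * pi / a) * (2 * pi)) {0..2*pi}"
      using has_integral_mult_left[OF has_integral_mult_right[OF I1, of "a/2"], of "2*pi"] by simp
    then show ?thesis by (simp add: integral_unique)
  qed
  show ?thesis
    unfolding mobius_cross_energy_def integrand integral_prod_continuous[OF cont]
    using inner outer a by (simp add: power2_eq_square)
qed

theorem mainTheorem2:
  fixes \<alpha> :: real
  assumes "\<alpha> > 0"
  shows "mobius_cross_energy circ1 (circ2 \<alpha>) = 4 * pi\<^sup>2"
  using main_calc[OF assms] .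

end
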